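(* There exists an optimal adaptive batching policy $\pi^*$ that maximizes $V^{\pi}_1(s)$ over all adaptive batching policies simultaneously for all $s\in\mathcal{S}$. For every $h\in[H]$ and $s\in\mathcal{S}$ the optimal values satisfy $$V^*_h(s)=\max_{B\in[\ell_h]}\mathbb{E}_{I\sim\mathcal{I}_{h,B}(s)}\left[\mathfrak{Q}^*_h(s,B;I,V^*_{h+B})\right],$$ with $V^*_{H+1}\equiv 0$, where the expectation samples fresh lookahead information independently between time steps. Moreover, an optimal policy chooses batching horizons $B^*_h(s)\in\arg\max_{B\in[\ell_h]}\mathbb{E}_{I\sim\mathcal{I}_{h,B}(s)}[\mathfrak{Q}^*_h(s,B;I,V^*_{h+B})]$, and when starting a new batch at step $h$ in state $s$ with length $B^*_h=B^*_h(s)$ and lookahead $I=I_{h,B^*_h}(s)$ it is optimal to play a deterministic Markov policy $$\phi^{*,h}\in\arg\max_{\phi}\left\{\sum_{b=0}^{B^*_h-1}\mathfrak{R}_{h+b\mid h}(s,\phi,I)+V^*_{h+B^*_h}\big(\mathfrak{s}_{h+B^*_h\mid h}(s,\phi,I)\big)\right\}.$$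
   Context: Episodic tabular MDP with finite states $\mathcal{S}$, actions $\mathcal{A}$, horizon $H$, rewards in $[0,1]$ with distributions $\mathcal{R}_h(s,a)$ and transitions $P_h$, independent across time steps (arbitrarily correlated across state-actions within a step). Fix a lookahead range $\ell\ge1$ and let $\ell_h=\min\{\ell,H-h+1\}$, $[n]=\{1,\dots,n\}$. For $B\in[\ell_h]$, the $B$-step lookahead information $I_{h,B}(s)$ from state $s$ at step $h$ consists of the realized rewards and next states of all state-action pairs reachable from $s$ at steps $h,\dots,h+B-1$ (equivalently, the realized trajectories from $s$ under every deterministic Markov policy over those steps); its distribution, $\mathcal{I}_{h,B}(s)$, is obtained by sampling rewards/next states from the model independently across time steps. For a deterministic Markov policy $\phi$, $\mathfrak{R}_{t\mid h}(s,\phi,I)$ and $\mathfrak{s}_{t\mid h}(s,\phi,I)$ are the reward at step $t$ and the state at step $t$ when starting at $s_h=s$ and following $\phi$ under realization $I$. For $V\in\mathbb{R}^{\mathcal{S}}$, $\mathfrak{Q}^*_h(s,B;I,V)=\max_{\phi}\{\sum_{t=h}^{h+B-1}\mathfrak{R}_{t\mid h}(s,\phi,I)+V(\mathfrak{s}_{h+B\mid h}(s,\phi,I))\}$, the max being over deterministic Markov policies. An adaptive batching policy (ABP) $\pi$ is given by batching horizons $B^\pi_h(s)\in[\ell_h]$ and deterministic Markov policies $\phi^h(s,I;\pi)$: starting at $h=1$, at the start of a batch at step $h$ in state $s_h$ it picks $B_h=B^\pi_h(s_h)$, observes $I=I_{h,B_h}(s_h)$ (fresh, independent of the past), plays $\phi^h(s_h,I;\pi)$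 for $B_h$ steps, and starts the next batch at step $h+B_h$, until $H$ steps are played. $E^n_h$ denotes the event that a batch starts at step $h$. The value is $V^\pi_h(s)=\mathbb{E}[\sum_{t=h}^H R_t\mid s_h=s,E^n_h,\pi]$, and $V^*_1(s)=\max_{\pi}V^\pi_1(s)$ over ABPs. *)

theory Defs
  imports "HOL-Probability.Probability"
begin

text \<open>Model: per time step t a probability space M t of "step realizations" w;
  R t w s a is the realized reward and N t w s a the realized next state of the
  pair (s,a) at step t. Realizations of different state-action pairs at the same step
  are arbitrarily correlated (they are functions of the same w); different steps are
  independent (product measure).\<close>

type_synonym ('s,'a) mpol = "nat \<Rightarrow> 's \<Rightarrow> 'a"

text \<open>Lookahead information: for every deterministic Markov policy, the realized
  trajectory (states at steps h..h+B, rewards at steps h..h+B-1).\<close>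
type_synonym ('s,'a) info = "('s,'a) mpol \<Rightarrow> (nat \<Rightarrow> 's) \<times> (nat \<Rightarrow> real)"

text \<open>An adaptive batching policy: batching horizons and batch policies.\<close>
type_synonym ('s,'a) abp = "(nat \<Rightarrow> 's \<Rightarrow> nat) \<times> (nat \<Rightarrow> 's \<Rightarrow> ('s,'a) info \<Rightarrow> ('s,'a) mpol)"

fun st_off :: "(nat \<Rightarrow> 'w \<Rightarrow> 's \<Rightarrow> 'a \<Rightarrow> 's) \<Rightarrow> (nat \<Rightarrow> 'w) \<Rightarrow> nat \<Rightarrow> 's \<Rightarrow> ('s,'a) mpol \<Rightarrow> nat \<Rightarrow> 's" where
  "st_off N \<omega> h s \<phi> 0 = s"
| "st_off N \<omega> h s \<phi> (Suc k) =
     (let x = st_off N \<omega> h s \<phi> k in N (h + k) (\<omega> (h + k)) x (\<phi> (h + k) x))"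

definition rew_off :: "(nat \<Rightarrow> 'w \<Rightarrow> 's \<Rightarrow> 'a \<Rightarrow> real) \<Rightarrow> (nat \<Rightarrow> 'w \<Rightarrow> 's \<Rightarrow> 'a \<Rightarrow> 's) \<Rightarrow>
    (nat \<Rightarrow> 'w) \<Rightarrow> nat \<Rightarrow> 's \<Rightarrow> ('s,'a) mpol \<Rightarrow> nat \<Rightarrow> real" where
  "rew_off R N \<omega> h s \<phi> k =
     (let x = st_off N \<omega> h s \<phi> k in R (h + k) (\<omega> (h + k)) x (\<phi> (h + k) x))"

text \<open>The B-step lookahead information I_{h,B}(s) under the realization omega
  (omega t = realization of step t).\<close>
definition lookahead :: "(nat \<Rightarrow> 'w \<Rightarrow> 's \<Rightarrow> 'a \<Rightarrow> real) \<Rightarrow> (nat \<Rightarrow> 'w \<Rightarrow> 's \<Rightarrow> 'a \<Rightarrow> 's) \<Rightarrow>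
    (nat \<Rightarrow> 'w) \<Rightarrow> nat \<Rightarrow> nat \<Rightarrow> 's \<Rightarrow> ('s,'a) info" where
  "lookahead R N \<omega> h B s = (\<lambda>\<phi>.
     ((\<lambda>t. if h \<le> t \<and> t \<le> h + B then st_off N \<omega> h s \<phi> (t - h) else undefined),
      (\<lambda>t. if h \<le> t \<and> t < h + B then rew_off R N \<omega> h s \<phi> (t - h) else undefined)))"

definition frakR :: "('s,'a) info \<Rightarrow> ('s,'a) mpol \<Rightarrow> nat \<Rightarrow> real" where
  "frakR I \<phi> t = snd (I \<phi>) t"

definition fraks :: "('s,'a) info \<Rightarrow> ('s,'a) mpol \<Rightarrow> nat \<Rightarrow> 's" where
  "fraks I \<phi> t = fst (I \<phi>) t"

definition Qstar :: "nat \<Rightarrow> nat \<Rightarrow> ('s,'a) info \<Rightarrow> ('s \<Rightarrow> real) \<Rightarrow> real" where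
  "Qstar h B I V = Max (range (\<lambda>\<phi>. (\<Sum>t\<in>{h..<h + B}. frakR I \<phi> t) + V (fraks I \<phi> (h + B))))"

definition lh :: "nat \<Rightarrow> nat \<Rightarrow> nat \<Rightarrow> nat" where
  "lh H L h = min L (H - h + 1)"

text \<open>Realized total reward from step h on, when a batch starts at step h in state s
  (fuel argument bounds the number of batches).\<close>
fun ret :: "(nat \<Rightarrow> 'w \<Rightarrow> 's \<Rightarrow> 'a \<Rightarrow> real) \<Rightarrow> (nat \<Rightarrow> 'w \<Rightarrow> 's \<Rightarrow> 'a \<Rightarrow> 's) \<Rightarrow> nat \<Rightarrow>
    ('s,'a) abp \<Rightarrow> (nat \<Rightarrow> 'w) \<Rightarrow> nat \<Rightarrow> nat \<Rightarrow> 's \<Rightarrow> real" where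
  "ret R N H \<pi> \<omega> 0 h s = 0"
| "ret R N H \<pi> \<omega> (Suc n) h s =
    (if H < h then 0 else
      (let B = fst \<pi> h s; I = lookahead R N \<omega> h B s; \<phi> = snd \<pi> h s I in
        (\<Sum>t\<in>{h..<h + B}. frakR I \<phi> t) + ret R N H \<pi> \<omega> n (h + B) (fraks I \<phi> (h + B))))"

definition Omega :: "(nat \<Rightarrow> 'w measure) \<Rightarrow> nat \<Rightarrow> (nat \<Rightarrow> 'w) measure" where
  "Omega M H = PiM {1..H} M"

definition Vpi :: "(nat \<Rightarrow> 'w \<Rightarrow> 's \<Rightarrow> 'a \<Rightarrow> real) \<Rightarrow> (nat \<Rightarrow> 'w \<Rightarrow> 's \<Rightarrow> 'a \<Rightarrow> 's) \<Rightarrow>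
    (nat \<Rightarrow> 'w measure) \<Rightarrow> nat \<Rightarrow> ('s,'a) abp \<Rightarrow> nat \<Rightarrow> 's \<Rightarrow> real" where
  "Vpi R N M H \<pi> h s = (\<integral>\<omega>. ret R N H \<pi> \<omega> (Suc H) h s \<partial>Omega M H)"

text \<open>Admissible adaptive batching policies: batching horizons in [l_h], and the
  realized return is a random variable (so that its expectation is meaningful).\<close>
definition is_abp :: "(nat \<Rightarrow> 'w \<Rightarrow> 's \<Rightarrow> 'a \<Rightarrow> real) \<Rightarrow> (nat \<Rightarrow> 'w \<Rightarrow> 's \<Rightarrow> 'a \<Rightarrow> 's) \<Rightarrow>
    (nat \<Rightarrow> 'w measure) \<Rightarrow> nat \<Rightarrow> nat \<Rightarrow> ('s,'a) abp \<Rightarrow> bool" where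
  "is_abp R N M H L \<pi> \<longleftrightarrow>
     (\<forall>h\<in>{1..H}. \<forall>s. fst \<pi> h s \<in> {1..lh H L h}) \<and>
     (\<forall>h\<in>{1..H}. \<forall>s. (\<lambda>\<omega>. ret R N H \<pi> \<omega> (Suc H) h s) \<in> borel_measurable (Omega M H))"

definition Vstar :: "(nat \<Rightarrow> 'w \<Rightarrow> 's \<Rightarrow> 'a \<Rightarrow> real) \<Rightarrow> (nat \<Rightarrow> 'w \<Rightarrow> 's \<Rightarrow> 'a \<Rightarrow> 's) \<Rightarrow>
    (nat \<Rightarrow> 'w measure) \<Rightarrow> nat \<Rightarrow> nat \<Rightarrow> nat \<Rightarrow> 's \<Rightarrow> real" where
  "Vstar R N M H L h s = (SUP \<pi>\<in>{\<pi>. is_abp R N M H L \<pi>}. Vpi R N M H \<pi> h s)"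

end

theory Submission imports Defs begin

definition selL :: "'p list \<Rightarrow> ('p \<Rightarrow> real) \<Rightarrow> 'p \<Rightarrow> 'p" where
  "selL xs v b = foldl (\<lambda>b \<phi>. if v b < v \<phi> then \<phi> else b) b xs"

lemma selL_Cons: "selL (x # xs) v b = selL xs v (if v b < v x then x else b)"
  unfolding selL_def by simp

lemma selL_in: "selL xs v b \<in> insert b (set xs)"
proof (induction xs arbitrary: b)
  case Nil then show ?case by (simp add: selL_def)
next
  case (Cons x xs)
  have "selL xs v (if v b < v x then x else b) \<in> insert (if v b < v x then x else b) (set xs)"
    by (rule Cons.IH)
  then show ?case by (auto simp: selL_Cons split: if_splits)
qed

lemma selL_max: "\<phi> \<in> insert b (set xs) \<Longrightarrow> v \<phi> \<le> v (selL xs v b)"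
proof (induction xs arbitrary: b \<phi>)
  case Nil then show ?case by (simp add: selL_def)
next
  case (Cons x xs)
  define b' where "b' = (if v b < v x then x else b)"
  have 1: "v \<psi> \<le> v (selL xs v b')" if "\<psi> \<in> insert b' (set xs)" for \<psi> using Cons.IH that by blast
  have b2: "v b \<le> v b'" "v x \<le> v b'" unfolding b'_def by auto
  have b3: "v b' \<le> v (selL xs v b')" using 1 by blast
  have e: "selL (x # xs) v b = selL xs v b'" unfolding b'_def by (rule selL_Cons)
  from Cons.prems consider "\<phi> = b" | "\<phi> = x" | "\<phi> \<in> set xs" by auto
  then show ?case
  proof cases
    case 1 then have "v \<phi> = v b" by simp
    then show ?thesis unfolding e using b2 b3 by linarith
  next
    case 2 then have "v \<phi> = v x" by simp
    then show ?thesis unfolding e using b2 b3 by linarith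
  next
    case 3 then show ?thesis unfolding e using 1 by blast
  qed
qed

lemma selL_meas:
  fixes v :: "'p \<Rightarrow> 'm \<Rightarrow> real"
  assumes F: "countable F" and xs: "set xs \<subseteq> F"
    and v: "\<And>\<phi>. \<phi> \<in> F \<Longrightarrow> v \<phi> \<in> borel_measurable M"
    and b: "b \<in> measurable M (count_space F)"
  shows "(\<lambda>\<omega>. selL xs (\<lambda>\<phi>. v \<phi> \<omega>) (b \<omega>)) \<in> measurable M (count_space F)"
  using xs b
proof (induction xs arbitrary: b)
  case Nil then show ?case by (simp add: selL_def)
next
  case (Cons x xs)
  have vb: "(\<lambda>\<omega>. v (b \<omega>) \<omega>) \<in> borel_measurable M"
    by (rule measurable_compose_countable'[OF _ Cons.prems(2) F]) (rule v)
  have xF: "x \<in> F" using Cons.prems by auto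
  have "(\<lambda>\<omega>. if v (b \<omega>) \<omega> < v x \<omega> then x else b \<omega>) \<in> measurable M (count_space F)"
  proof (rule measurable_If)
    show "(\<lambda>\<omega>. x) \<in> measurable M (count_space F)" using xF by simp
    show "b \<in> measurable M (count_space F)" by (rule Cons.prems)
    show "{\<omega> \<in> space M. v (b \<omega>) \<omega> < v x \<omega>} \<in> sets M"
      using vb v[OF xF] by simp
  qed
  then have "(\<lambda>\<omega>. selL xs (\<lambda>\<phi>. v \<phi> \<omega>) (if v (b \<omega>) \<omega> < v x \<omega> then x else b \<omega>)) \<in> measurable M (count_space F)"
    using Cons.IH[of "\<lambda>\<omega>. if v (b \<omega>) \<omega> < v x \<omega> then x else b \<omega>"] Cons.prems by auto
  then show ?case by (simp add: selL_Cons)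
qed

locale mdp =
  fixes M :: "nat \<Rightarrow> 'w measure"
    and R :: "nat \<Rightarrow> 'w \<Rightarrow> 's::finite \<Rightarrow> 'a::finite \<Rightarrow> real"
    and N :: "nat \<Rightarrow> 'w \<Rightarrow> 's \<Rightarrow> 'a \<Rightarrow> 's"
    and H L :: nat
  assumes L1: "L \<ge> 1"
    and PS: "\<forall>t\<in>{1..H}. prob_space (M t)"
    and RM: "\<forall>t\<in>{1..H}. \<forall>s a. (\<lambda>w. R t w s a) \<in> borel_measurable (M t)"
    and NM: "\<forall>t\<in>{1..H}. \<forall>s a. (\<lambda>w. N t w s a) \<in> measurable (M t) (count_space UNIV)"
    and RB: "\<forall>t\<in>{1..H}. \<forall>w\<in>space (M t). \<forall>s a. 0 \<le> R t w s a \<and> R t w s a \<le> 1"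
begin

abbreviation "\<Omega> \<equiv> Omega M H"

definition M' :: "nat \<Rightarrow> 'w measure" where
  "M' i = (if i \<in> {1..H} then M i else count_space {})"

lemma Omega_M': "\<Omega> = PiM {1..H} M'"
  unfolding Omega_def M'_def by (rule PiM_cong) auto

lemma PiM_M'_sub: "I \<subseteq> {1..H} \<Longrightarrow> PiM I M' = PiM I M"
  unfolding M'_def by (rule PiM_cong) auto

lemma psf: "product_sigma_finite M'"
  unfolding product_sigma_finite_def
proof
  fix i show "sigma_finite_measure (M' i)"
    using PS unfolding M'_def
    by (auto intro: prob_space_imp_sigma_finite sigma_finite_measure_count_space_finite)
qed

lemma prob_PiM': "I \<subseteq> {1..H} \<Longrightarrow> prob_space (PiM I M')"
  by (rule prob_space_PiM) (use PS in \<open>auto simp: M'_def\<close>)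

lemma prob_Omega: "prob_space \<Omega>"
  using prob_PiM'[of "{1..H}"] Omega_M' by simp

lemma comp_meas: "t \<in> {1..H} \<Longrightarrow> (\<lambda>\<omega>. \<omega> t) \<in> measurable \<Omega> (M t)"
  unfolding Omega_def by (rule measurable_component_singleton)

lemma space_Omega: "\<omega> \<in> space \<Omega> \<Longrightarrow> t \<in> {1..H} \<Longrightarrow> \<omega> t \<in> space (M t)"
  unfolding Omega_def by (auto simp: space_PiM)

lemma st_off_meas:
  assumes "1 \<le> h" "h + k \<le> Suc H"
  shows "(\<lambda>\<omega>. st_off N \<omega> h s \<phi> k) \<in> measurable \<Omega> (count_space UNIV)"
  using assms
proof (induction k)
  case 0 then show ?case by simp
next
  case (Suc k)
  have t: "h + k \<in> {1..H}" using Suc.prems by auto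
  have IH: "(\<lambda>\<omega>. st_off N \<omega> h s \<phi> k) \<in> measurable \<Omega> (count_space UNIV)"
    using Suc by auto
  have "(\<lambda>\<omega>. (\<lambda>x \<omega>. N (h + k) (\<omega> (h + k)) x (\<phi> (h + k) x)) (st_off N \<omega> h s \<phi> k) \<omega>)
         \<in> measurable \<Omega> (count_space UNIV)"
  proof (rule measurable_compose_countable'[OF _ IH])
    fix x :: 's
    show "(\<lambda>\<omega>. N (h + k) (\<omega> (h + k)) x (\<phi> (h + k) x)) \<in> measurable \<Omega> (count_space UNIV)"
      using measurable_compose[OF comp_meas[OF t]] NM t by blast
  qed auto
  then show ?case by (simp add: Let_def)
qed

lemma rew_off_meas:
  assumes "1 \<le> h" "h + k \<le> H"
  shows "(\<lambda>\<omega>. rew_off R N \<omega> h s \<phi> k) \<in> borel_measurable \<Omega>"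
proof -
  have t: "h + k \<in> {1..H}" using assms by auto
  have IH: "(\<lambda>\<omega>. st_off N \<omega> h s \<phi> k) \<in> measurable \<Omega> (count_space UNIV)"
    using st_off_meas assms by auto
  have "(\<lambda>\<omega>. (\<lambda>x \<omega>. R (h + k) (\<omega> (h + k)) x (\<phi> (h + k) x)) (st_off N \<omega> h s \<phi> k) \<omega>)
         \<in> borel_measurable \<Omega>"
  proof (rule measurable_compose_countable'[OF _ IH])
    fix x :: 's
    show "(\<lambda>\<omega>. R (h + k) (\<omega> (h + k)) x (\<phi> (h + k) x)) \<in> borel_measurable \<Omega>"
      using measurable_compose[OF comp_meas[OF t]] RM t by blast
  qed auto
  then show ?thesis by (simp add: rew_off_def Let_def)
qed

lemma rew_off_bnd:
  assumes "1 \<le> h" "h + k \<le> H" "\<omega> \<in> space \<Omega>"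
  shows "0 \<le> rew_off R N \<omega> h s \<phi> k \<and> rew_off R N \<omega> h s \<phi> k \<le> 1"
proof -
  have t: "h + k \<in> {1..H}" using assms by auto
  show ?thesis using RB t space_Omega[OF assms(3) t] by (simp add: rew_off_def Let_def)
qed

lemma frakR_look: "h \<le> t \<Longrightarrow> t < h + B \<Longrightarrow>
   frakR (lookahead R N \<omega> h B s) \<phi> t = rew_off R N \<omega> h s \<phi> (t - h)"
  by (simp add: frakR_def lookahead_def)

lemma fraks_look: "fraks (lookahead R N \<omega> h B s) \<phi> (h + B) = st_off N \<omega> h s \<phi> B"
  by (simp add: fraks_def lookahead_def)

lemma sum_look: "(\<Sum>t\<in>{h..<h + B}. frakR (lookahead R N \<omega> h B s) \<phi> t)
   = (\<Sum>k<B. rew_off R N \<omega> h s \<phi> k)"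
proof -
  have "(\<Sum>t\<in>{h..<h + B}. frakR (lookahead R N \<omega> h B s) \<phi> t)
      = (\<Sum>t\<in>{h..<h + B}. rew_off R N \<omega> h s \<phi> (t - h))"
    by (rule sum.cong) (auto simp: frakR_look)
  also have "\<dots> = (\<Sum>k<B. rew_off R N \<omega> h s \<phi> k)"
    by (rule sum.reindex_bij_witness[of _ "\<lambda>k. k + h" "\<lambda>t. t - h"]) auto
  finally show ?thesis .
qed


lemma st_off_local:
  "(\<And>t. h \<le> t \<Longrightarrow> t < h + k \<Longrightarrow> \<omega> t = \<omega>' t) \<Longrightarrow> st_off N \<omega> h s \<phi> k = st_off N \<omega>' h s \<phi> k"
  by (induction k) (auto simp: Let_def)

lemma st_off_plocal:
  "(\<And>t. h \<le> t \<Longrightarrow> t < h + k \<Longrightarrow> \<phi> t = \<phi>' t) \<Longrightarrow> st_off N \<omega> h s \<phi> k = st_off N \<omega> h s \<phi>' k"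
  by (induction k) (auto simp: Let_def)

lemma rew_off_local:
  assumes a: "\<And>t. h \<le> t \<Longrightarrow> t < h + Suc k \<Longrightarrow> \<omega> t = \<omega>' t"
  shows "rew_off R N \<omega> h s \<phi> k = rew_off R N \<omega>' h s \<phi> k"
proof -
  have "st_off N \<omega> h s \<phi> k = st_off N \<omega>' h s \<phi> k" by (rule st_off_local) (use a in auto)
  then show ?thesis using a[of "h+k"] by (simp add: rew_off_def Let_def)
qed

lemma rew_off_plocal:
  assumes a: "\<And>t. h \<le> t \<Longrightarrow> t < h + Suc k \<Longrightarrow> \<phi> t = \<phi>' t"
  shows "rew_off R N \<omega> h s \<phi> k = rew_off R N \<omega> h s \<phi>' k"
proof -
  have "st_off N \<omega> h s \<phi> k = st_off N \<omega> h s \<phi>' k" by (rule st_off_plocal) (use a in auto)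
  then show ?thesis using a[of "h+k"] by (simp add: rew_off_def Let_def)
qed

lemma lookahead_local:
  assumes "\<And>t. h \<le> t \<Longrightarrow> t < h + B \<Longrightarrow> \<omega> t = \<omega>' t"
  shows "lookahead R N \<omega> h B s = lookahead R N \<omega>' h B s"
proof -
  have a: "st_off N \<omega> h s \<phi> k = st_off N \<omega>' h s \<phi> k" if "k \<le> B" for \<phi> k
    by (rule st_off_local) (use assms that in auto)
  have b: "rew_off R N \<omega> h s \<phi> k = rew_off R N \<omega>' h s \<phi> k" if "k < B" for \<phi> k
    by (rule rew_off_local) (use assms that in auto)
  show ?thesis unfolding lookahead_def
    by (intro ext prod_eqI) (auto intro!: ext simp: a b)
qed

lemma ret_local:
  "(\<And>t. h \<le> t \<Longrightarrow> \<omega> t = \<omega>' t) \<Longrightarrow> ret R N H \<pi> \<omega> n h s = ret R N H \<pi> \<omega>' n h s"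
proof (induction n arbitrary: h s)
  case 0 then show ?case by simp
next
  case (Suc n)
  have la: "lookahead R N \<omega> h B s = lookahead R N \<omega>' h B s" for B
    by (rule lookahead_local) (use Suc.prems in auto)
  show ?case using Suc.IH[of "h + fst \<pi> h s"] Suc.prems by (simp add: Let_def la)
qed

definition hor :: "('s,'a) abp \<Rightarrow> bool" where
  "hor \<pi> \<longleftrightarrow> (\<forall>h\<in>{1..H}. \<forall>s. fst \<pi> h s \<in> {1..lh H L h})"

lemma horD: "hor \<pi> \<Longrightarrow> 1 \<le> h \<Longrightarrow> h \<le> H \<Longrightarrow> 1 \<le> fst \<pi> h s \<and> fst \<pi> h s \<le> L \<and> h + fst \<pi> h s \<le> Suc H"
proof -
  assume "hor \<pi>" "1 \<le> h" "h \<le> H"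
  then have "fst \<pi> h s \<in> {1..min L (H - h + 1)}" unfolding hor_def lh_def by auto
  then show ?thesis using \<open>h \<le> H\<close> by auto
qed

lemma sum_rew_bnd:
  assumes "1 \<le> h" "h + B \<le> Suc H" "\<omega> \<in> space \<Omega>"
  shows "0 \<le> (\<Sum>k<B. rew_off R N \<omega> h s \<phi> k) \<and> (\<Sum>k<B. rew_off R N \<omega> h s \<phi> k) \<le> B"
proof -
  have b: "0 \<le> rew_off R N \<omega> h s \<phi> k \<and> rew_off R N \<omega> h s \<phi> k \<le> 1" if "k < B" for k
    using rew_off_bnd[of h k \<omega>] assms that by auto
  have "(\<Sum>k<B. rew_off R N \<omega> h s \<phi> k) \<le> (\<Sum>k<B. 1)"
    by (rule sum_mono) (use b in auto)
  moreover have "0 \<le> (\<Sum>k<B. rew_off R N \<omega> h s \<phi> k)"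
    by (rule sum_nonneg) (use b in auto)
  ultimately show ?thesis by simp
qed

lemma ret_bnd:
  assumes "hor \<pi>" "1 \<le> h" "\<omega> \<in> space \<Omega>"
  shows "0 \<le> ret R N H \<pi> \<omega> n h s \<and> ret R N H \<pi> \<omega> n h s \<le> real n * L"
  using assms(2)
proof (induction n arbitrary: h s)
  case 0 then show ?case by simp
next
  case (Suc n)
  show ?case
  proof (cases "H < h")
    case True then show ?thesis by simp
  next
    case False
    let ?B = "fst \<pi> h s"
    have B: "1 \<le> ?B" "?B \<le> L" "h + ?B \<le> Suc H" using horD[OF assms(1) Suc.prems, of s] False by auto
    let ?I = "lookahead R N \<omega> h ?B s"
    let ?\<phi> = "snd \<pi> h s ?I"
    have S: "0 \<le> (\<Sum>k<?B. rew_off R N \<omega> h s ?\<phi> k) \<and> (\<Sum>k<?B. rew_off R N \<omega> h s ?\<phi> k) \<le> ?B"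
      by (rule sum_rew_bnd) (use B Suc.prems assms in auto)
    have IH: "0 \<le> ret R N H \<pi> \<omega> n (h + ?B) (fraks ?I ?\<phi> (h + ?B)) \<and>
       ret R N H \<pi> \<omega> n (h + ?B) (fraks ?I ?\<phi> (h + ?B)) \<le> real n * L"
      using Suc.IH B Suc.prems by auto
    have "real ?B \<le> real L" using B by simp
    then show ?thesis using False S IH by (simp add: Let_def sum_look algebra_simps)
  qed
qed

lemma ret_fuel:
  assumes "hor \<pi>" "1 \<le> h" "H + 1 - h \<le> n"
  shows "ret R N H \<pi> \<omega> (Suc n) h s = ret R N H \<pi> \<omega> n h s"
  using assms(2,3)
proof (induction n arbitrary: h s)
  case 0 then show ?case by simp
next
  case (Suc n)
  show ?case
  proof (cases "H < h")
    case True then show ?thesis by simp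
  next
    case False
    let ?B = "fst \<pi> h s"
    have B: "1 \<le> ?B" "h + ?B \<le> Suc H" using horD[OF assms(1) Suc.prems(1), of s] False by auto
    have "ret R N H \<pi> \<omega> (Suc n) (h + ?B) x = ret R N H \<pi> \<omega> n (h + ?B) x" for x
      by (rule Suc.IH) (use B Suc.prems in auto)
    then show ?thesis using False by (simp add: Let_def)
  qed
qed

lemma ret_fuel_H:
  assumes "hor \<pi>" "2 \<le> h"
  shows "ret R N H \<pi> \<omega> H h s = ret R N H \<pi> \<omega> (Suc H) h s"
  using ret_fuel[OF assms(1), of h H] assms by auto


lemma ret_meas:
  assumes hp: "hor \<pi>"
    and ch: "\<forall>h\<in>{1..H}. \<forall>s. \<exists>F. countable F \<and>
       (\<lambda>\<omega>. snd \<pi> h s (lookahead R N \<omega> h (fst \<pi> h s) s)) \<in> measurable \<Omega> (count_space F)"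
    and h: "1 \<le> h"
  shows "(\<lambda>\<omega>. ret R N H \<pi> \<omega> n h s) \<in> borel_measurable \<Omega>"
  using h
proof (induction n arbitrary: h s)
  case 0 then show ?case by simp
next
  case (Suc n)
  show ?case
  proof (cases "H < h")
    case True then show ?thesis by simp
  next
    case False
    define B where "B = fst \<pi> h s"
    have B: "1 \<le> B" "h + B \<le> Suc H" using horD[OF hp Suc.prems, of s] False B_def by auto
    obtain F where F: "countable F"
      "(\<lambda>\<omega>. snd \<pi> h s (lookahead R N \<omega> h B s)) \<in> measurable \<Omega> (count_space F)"
    proof -
      have hh: "h \<in> {1..H}" using Suc.prems False by auto
      show ?thesis using ch[rule_format, OF hh, of s] that unfolding B_def by blast
    qed
    define G where "G = (\<lambda>\<phi> \<omega>. (\<Sum>k<B. rew_off R N \<omega> h s \<phi> k)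
                       + ret R N H \<pi> \<omega> n (h + B) (st_off N \<omega> h s \<phi> B))"
    have eq: "ret R N H \<pi> \<omega> (Suc n) h s = G (snd \<pi> h s (lookahead R N \<omega> h B s)) \<omega>" for \<omega>
      using False unfolding G_def B_def by (simp add: Let_def sum_look fraks_look)
    have "(\<lambda>\<omega>. G (snd \<pi> h s (lookahead R N \<omega> h B s)) \<omega>) \<in> borel_measurable \<Omega>"
    proof (rule measurable_compose_countable'[OF _ F(2) F(1)])
      fix \<phi> assume "\<phi> \<in> F"
      have m1: "(\<lambda>\<omega>. \<Sum>k<B. rew_off R N \<omega> h s \<phi> k) \<in> borel_measurable \<Omega>"
        by (rule borel_measurable_sum) (rule rew_off_meas, use Suc.prems B in auto)
      have m2: "(\<lambda>\<omega>. (\<lambda>x \<omega>. ret R N H \<pi> \<omega> n (h + B) x) (st_off N \<omega> h s \<phi> B) \<omega>) \<in> borel_measurable \<Omega>"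
        by (rule measurable_compose_countable'[OF _ st_off_meas]) (use Suc.IH Suc.prems B in auto)
      show "G \<phi> \<in> borel_measurable \<Omega>" unfolding G_def using m1 m2 by simp
    qed
    moreover have e2: "(\<lambda>\<omega>. ret R N H \<pi> \<omega> (Suc n) h s) = (\<lambda>\<omega>. G (snd \<pi> h s (lookahead R N \<omega> h B s)) \<omega>)"
      using eq by (intro ext)
    ultimately show ?thesis by simp
  qed
qed

definition val :: "nat \<Rightarrow> nat \<Rightarrow> ('s,'a) info \<Rightarrow> ('s \<Rightarrow> real) \<Rightarrow> ('s,'a) mpol \<Rightarrow> real" where
  "val h B I V \<phi> = (\<Sum>t\<in>{h..<h + B}. frakR I \<phi> t) + V (fraks I \<phi> (h + B))"

lemma Qstar_val: "Qstar h B I V = Max (range (val h B I V))"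
  unfolding Qstar_def val_def ..

lemma val_look: "val h B (lookahead R N \<omega> h B s) V \<phi> = (\<Sum>k<B. rew_off R N \<omega> h s \<phi> k) + V (st_off N \<omega> h s \<phi> B)"
  unfolding val_def by (simp add: sum_look fraks_look)

definition Phi :: "nat \<Rightarrow> nat \<Rightarrow> ('s,'a) mpol set" where
  "Phi h B = PiE {h..<h + B} (\<lambda>_. UNIV)"

lemma Phi_finite: "finite (Phi h B)"
  unfolding Phi_def by (rule finite_PiE) auto

lemma Phi_ne: "Phi h B \<noteq> {}"
  unfolding Phi_def by (simp add: PiE_eq_empty_iff)

lemma restrict_Phi: "restrict \<phi> {h..<h + B} \<in> Phi h B"
  unfolding Phi_def by (simp add: PiE_eq_empty_iff)

lemma val_restrict:
  "val h B (lookahead R N \<omega> h B s) V \<phi> = val h B (lookahead R N \<omega> h B s) V (restrict \<phi> {h..<h + B})"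
proof -
  have "st_off N \<omega> h s \<phi> B = st_off N \<omega> h s (restrict \<phi> {h..<h + B}) B"
    by (rule st_off_plocal) auto
  moreover have "rew_off R N \<omega> h s \<phi> k = rew_off R N \<omega> h s (restrict \<phi> {h..<h + B}) k" if "k < B" for k
    by (rule rew_off_plocal) (use that in auto)
  ultimately show ?thesis unfolding val_look by simp
qed

lemma range_val: "range (val h B (lookahead R N \<omega> h B s) V) = val h B (lookahead R N \<omega> h B s) V ` Phi h B"
proof
  show "range (val h B (lookahead R N \<omega> h B s) V) \<subseteq> val h B (lookahead R N \<omega> h B s) V ` Phi h B"
    using val_restrict restrict_Phi by blast
qed auto

lemma Qstar_Phi: "Qstar h B (lookahead R N \<omega> h B s) V = Max ((\<lambda>\<phi>. val h B (lookahead R N \<omega> h B s) V \<phi>) ` Phi h B)"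
  unfolding Qstar_val range_val ..

lemma Qstar_ge: "val h B (lookahead R N \<omega> h B s) V \<phi> \<le> Qstar h B (lookahead R N \<omega> h B s) V"
  unfolding Qstar_val range_val
  by (subst val_restrict) (rule Max_ge, auto intro: finite_imageI Phi_finite restrict_Phi)

lemma Qstar_eq:
  assumes "\<And>\<phi>'. val h B (lookahead R N \<omega> h B s) V \<phi>' \<le> val h B (lookahead R N \<omega> h B s) V \<phi>"
  shows "Qstar h B (lookahead R N \<omega> h B s) V = val h B (lookahead R N \<omega> h B s) V \<phi>"
proof (rule antisym)
  show "Qstar h B (lookahead R N \<omega> h B s) V \<le> val h B (lookahead R N \<omega> h B s) V \<phi>"
    unfolding Qstar_Phi using assms Phi_finite Phi_ne by (subst Max_le_iff) auto
qed (rule Qstar_ge)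

lemma Qstar_in: "\<exists>\<phi>. Qstar h B (lookahead R N \<omega> h B s) V = val h B (lookahead R N \<omega> h B s) V \<phi>"
proof -
  have "Qstar h B (lookahead R N \<omega> h B s) V \<in> (\<lambda>\<phi>. val h B (lookahead R N \<omega> h B s) V \<phi>) ` Phi h B"
    unfolding Qstar_Phi using Phi_finite Phi_ne by (intro Max_in) auto
  then show ?thesis by auto
qed

lemma val_meas:
  assumes "1 \<le> h" "h + B \<le> Suc H"
  shows "(\<lambda>\<omega>. val h B (lookahead R N \<omega> h B s) V \<phi>) \<in> borel_measurable \<Omega>"
proof -
  have m1: "(\<lambda>\<omega>. \<Sum>k<B. rew_off R N \<omega> h s \<phi> k) \<in> borel_measurable \<Omega>"
    by (rule borel_measurable_sum) (rule rew_off_meas, use assms in auto)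
  have m2: "(\<lambda>\<omega>. V (st_off N \<omega> h s \<phi> B)) \<in> borel_measurable \<Omega>"
  proof -
    have "V \<in> borel_measurable (count_space UNIV)" by simp
    then show ?thesis using measurable_compose[OF st_off_meas[OF assms, of s \<phi>]] by blast
  qed
  show ?thesis unfolding val_look using m1 m2 by simp
qed

lemma Qstar_meas:
  assumes "1 \<le> h" "h + B \<le> Suc H"
  shows "(\<lambda>\<omega>. Qstar h B (lookahead R N \<omega> h B s) V) \<in> borel_measurable \<Omega>"
  unfolding Qstar_Phi
  by (rule borel_measurable_Max[OF Phi_finite]) (rule val_meas[OF assms])

definition CV :: "('s \<Rightarrow> real) \<Rightarrow> real" where
  "CV V = (\<Sum>x\<in>UNIV. \<bar>V x\<bar>)"

lemma CV_ge: "\<bar>V x\<bar> \<le> CV V"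
  unfolding CV_def by (rule member_le_sum) auto

lemma val_bnd:
  assumes "1 \<le> h" "h + B \<le> Suc H" "\<omega> \<in> space \<Omega>"
  shows "\<bar>val h B (lookahead R N \<omega> h B s) V \<phi>\<bar> \<le> B + CV V"
proof -
  have "0 \<le> (\<Sum>k<B. rew_off R N \<omega> h s \<phi> k) \<and> (\<Sum>k<B. rew_off R N \<omega> h s \<phi> k) \<le> B"
    by (rule sum_rew_bnd[OF assms])
  moreover have "\<bar>V (st_off N \<omega> h s \<phi> B)\<bar> \<le> CV V" by (rule CV_ge)
  ultimately show ?thesis unfolding val_look by linarith
qed

lemma Qstar_bnd:
  assumes "1 \<le> h" "h + B \<le> Suc H" "\<omega> \<in> space \<Omega>"
  shows "\<bar>Qstar h B (lookahead R N \<omega> h B s) V\<bar> \<le> B + CV V"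
  using Qstar_in[of h B \<omega> s V] val_bnd[OF assms] by metis

lemma Qstar_int:
  assumes "1 \<le> h" "h + B \<le> Suc H"
  shows "integrable \<Omega> (\<lambda>\<omega>. Qstar h B (lookahead R N \<omega> h B s) V)"
proof -
  interpret prob_space \<Omega> by (rule prob_Omega)
  show ?thesis
    by (rule integrable_const_bound[where B="B + CV V"])
       (use Qstar_bnd[OF assms] Qstar_meas[OF assms] in auto)
qed


lemma norm_le_real: "0 \<le> x \<and> x \<le> c \<Longrightarrow> norm (x::real) \<le> c"
  by auto

lemma abp_hor: "is_abp R N M H L \<pi> \<Longrightarrow> hor \<pi>"
  unfolding is_abp_def hor_def by blast

lemma abp_meas:
  assumes "is_abp R N M H L \<pi>" "1 \<le> h"
  shows "(\<lambda>\<omega>. ret R N H \<pi> \<omega> (Suc H) h s) \<in> borel_measurable \<Omega>"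
proof (cases "h \<le> H")
  case True then show ?thesis using assms unfolding is_abp_def by auto
next
  case False then show ?thesis by simp
qed

lemma abp_int:
  assumes "is_abp R N M H L \<pi>" "1 \<le> h"
  shows "integrable \<Omega> (\<lambda>\<omega>. ret R N H \<pi> \<omega> (Suc H) h s)"
proof -
  interpret prob_space \<Omega> by (rule prob_Omega)
  have "AE \<omega> in \<Omega>. norm (ret R N H \<pi> \<omega> (Suc H) h s) \<le> real (Suc H) * L"
  proof (rule AE_I2)
    fix \<omega> assume "\<omega> \<in> space \<Omega>"
    then have "0 \<le> ret R N H \<pi> \<omega> (Suc H) h s \<and> ret R N H \<pi> \<omega> (Suc H) h s \<le> real (Suc H) * L"
      by (rule ret_bnd[OF abp_hor[OF assms(1)] assms(2)])
    then show "norm (ret R N H \<pi> \<omega> (Suc H) h s) \<le> real (Suc H) * L"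
      by (rule norm_le_real)
  qed
  then show ?thesis
    by (rule integrable_const_bound) (rule abp_meas[OF assms])
qed

lemma Vpi_bnd:
  assumes "is_abp R N M H L \<pi>" "1 \<le> h"
  shows "0 \<le> Vpi R N M H \<pi> h s \<and> Vpi R N M H \<pi> h s \<le> real (Suc H) * L"
proof -
  interpret prob_space \<Omega> by (rule prob_Omega)
  have b: "\<And>\<omega>. \<omega> \<in> space \<Omega> \<Longrightarrow> 0 \<le> ret R N H \<pi> \<omega> (Suc H) h s \<and> ret R N H \<pi> \<omega> (Suc H) h s \<le> real (Suc H) * L"
    using ret_bnd[OF abp_hor[OF assms(1)] assms(2)] by blast
  have "0 \<le> Vpi R N M H \<pi> h s" unfolding Vpi_def
    by (rule integral_nonneg_AE) (use b in auto)
  moreover have "Vpi R N M H \<pi> h s \<le> (\<integral>\<omega>. real (Suc H) * L \<partial>\<Omega>)" unfolding Vpi_def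
    by (rule integral_mono[OF abp_int[OF assms]]) (use b in auto)
  ultimately show ?thesis by (simp add: prob_space)
qed

lemma merge_look:
  assumes "h + B \<le> Suc H" "1 \<le> h"
  shows "lookahead R N (merge {1..<h+B} J (x, y)) h B s = lookahead R N x h B s"
  by (rule lookahead_local) (use assms in \<open>auto simp: merge_def\<close>)

lemma restrict_look:
  assumes "1 \<le> h"
  shows "lookahead R N (restrict \<omega> {1..<h+B}) h B s = lookahead R N \<omega> h B s"
  by (rule lookahead_local) (use assms in auto)

lemma decomp:
  fixes s :: 's
  assumes adm: "is_abp R N M H L \<pi>" and h: "h \<in> {1..H}"
  defines "B \<equiv> fst \<pi> h s"
  defines "D \<equiv> \<lambda>\<omega>. val h B (lookahead R N \<omega> h B s) (Vpi R N M H \<pi> (h + B))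
                       (snd \<pi> h s (lookahead R N \<omega> h B s))"
  shows "D \<in> borel_measurable \<Omega> \<and> Vpi R N M H \<pi> h s = integral\<^sup>L \<Omega> D"
proof -
  interpret psf: product_sigma_finite M' by (rule psf)
  have hp: "hor \<pi>" by (rule abp_hor[OF adm])
  have B: "1 \<le> B" "h + B \<le> Suc H" using horD[OF hp, of h s] h B_def by auto
  define I1 where "I1 = {1..<h+B}"
  define J where "J = {h+B..H}"
  have IJ: "I1 \<inter> J = {}" "finite I1" "finite J" unfolding I1_def J_def by auto
  have UIJ: "I1 \<union> J = {1..H}" unfolding I1_def J_def using B by auto
  have OM: "\<Omega> = PiM (I1 \<union> J) M'" unfolding UIJ by (rule Omega_M')
  interpret PI: prob_space "PiM I1 M'" by (rule prob_PiM') (use UIJ in auto)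
  interpret PJ: prob_space "PiM J M'" by (rule prob_PiM') (use UIJ in auto)
  interpret PO: prob_space \<Omega> by (rule prob_Omega)
  let ?la = "\<lambda>\<omega>. lookahead R N \<omega> h B s"
  let ?V = "Vpi R N M H \<pi> (h + B)"
  let ?g = "\<lambda>z \<omega>. ret R N H \<pi> \<omega> (Suc H) (h + B) z"
  have h1: "1 \<le> h" using h by auto
  have mla: "?la (merge I1 J (x, y)) = ?la x" for x y
    unfolding I1_def by (rule merge_look) (use B h1 in auto)
  have mmerge: "(\<lambda>y. merge I1 J (x, y)) \<in> measurable (PiM J M') \<Omega>" if "x \<in> space (PiM I1 M')" for x
    unfolding OM using measurable_compose[OF measurable_Pair1'[OF that] measurable_merge] by simp
  have C1: "(\<integral>y. ?g z (merge I1 J (x, y)) \<partial>PiM J M') = ?V z" if x: "x \<in> space (PiM I1 M')" for x z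
  proof -
    have gi: "integrable (PiM (I1 \<union> J) M') (?g z)" using abp_int[OF adm, of "h+B" z] h1 OM by simp
    have "?V z = integral\<^sup>L (PiM (I1 \<union> J) M') (?g z)" unfolding Vpi_def OM ..
    also have "\<dots> = (\<integral>x'. (\<integral>y. ?g z (merge I1 J (x', y)) \<partial>PiM J M') \<partial>PiM I1 M')"
      by (rule psf.product_integral_fold[OF IJ gi])
    also have "\<dots> = (\<integral>x'. (\<integral>y. ?g z (merge I1 J (x, y)) \<partial>PiM J M') \<partial>PiM I1 M')"
    proof (rule Bochner_Integration.integral_cong[OF refl], rule Bochner_Integration.integral_cong[OF refl])
      fix x' y
      show "?g z (merge I1 J (x', y)) = ?g z (merge I1 J (x, y))"
        by (rule ret_local) (auto simp: merge_def I1_def)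
    qed
    also have "\<dots> = (\<integral>y. ?g z (merge I1 J (x, y)) \<partial>PiM J M')"
      by (simp add: PI.prob_space)
    finally show ?thesis by simp
  qed
  have C2: "ret R N H \<pi> \<omega> (Suc H) h s =
      (\<Sum>t\<in>{h..<h + B}. frakR (?la \<omega>) (snd \<pi> h s (?la \<omega>)) t)
      + ?g (fraks (?la \<omega>) (snd \<pi> h s (?la \<omega>)) (h + B)) \<omega>" for \<omega>
  proof -
    have "ret R N H \<pi> \<omega> (Suc H) h s =
      (\<Sum>t\<in>{h..<h + B}. frakR (?la \<omega>) (snd \<pi> h s (?la \<omega>)) t)
      + ret R N H \<pi> \<omega> H (h + B) (fraks (?la \<omega>) (snd \<pi> h s (?la \<omega>)) (h + B))"
      using h by (simp add: Let_def B_def)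
    also have "ret R N H \<pi> \<omega> H (h + B) (fraks (?la \<omega>) (snd \<pi> h s (?la \<omega>)) (h + B))
       = ?g (fraks (?la \<omega>) (snd \<pi> h s (?la \<omega>)) (h + B)) \<omega>"
      by (rule ret_fuel_H[OF hp]) (use B h1 in auto)
    finally show ?thesis .
  qed
  have Dval: "D \<omega> = (\<Sum>t\<in>{h..<h + B}. frakR (?la \<omega>) (snd \<pi> h s (?la \<omega>)) t)
      + ?V (fraks (?la \<omega>) (snd \<pi> h s (?la \<omega>)) (h + B))" for \<omega>
    unfolding D_def val_def ..
  have Dmerge: "D (merge I1 J (x, y)) = D x" for x y
    unfolding D_def mla ..
  have inner: "(\<integral>y. ret R N H \<pi> (merge I1 J (x, y)) (Suc H) h s \<partial>PiM J M') = D x"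
    if x: "x \<in> space (PiM I1 M')" for x
  proof -
    let ?a = "\<Sum>t\<in>{h..<h + B}. frakR (?la x) (snd \<pi> h s (?la x)) t"
    let ?z = "fraks (?la x) (snd \<pi> h s (?la x)) (h + B)"
    have e: "ret R N H \<pi> (merge I1 J (x, y)) (Suc H) h s = ?a + ?g ?z (merge I1 J (x, y))" for y
      using C2[of "merge I1 J (x, y)"] unfolding mla .
    have gi: "integrable (PiM J M') (\<lambda>y. ?g ?z (merge I1 J (x, y)))"
    proof (rule PJ.integrable_const_bound[where B="real (Suc H) * L"])
      show "(\<lambda>y. ?g ?z (merge I1 J (x, y))) \<in> borel_measurable (PiM J M')"
        using measurable_compose[OF mmerge[OF x] abp_meas[OF adm, of "h+B" ?z]] h1 by simp
      have "\<And>y. y \<in> space (PiM J M') \<Longrightarrow> merge I1 J (x, y) \<in> space \<Omega>"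
        using measurable_space[OF mmerge[OF x]] by blast
      then show "AE y in PiM J M'. norm (?g ?z (merge I1 J (x, y))) \<le> real (Suc H) * L"
      proof (intro AE_I2)
        fix y assume yJ: "y \<in> space (PiM J M')"
        have "0 \<le> ?g ?z (merge I1 J (x, y)) \<and> ?g ?z (merge I1 J (x, y)) \<le> real (Suc H) * L"
          by (rule ret_bnd[OF hp]) (use h1 yJ \<open>\<And>y. y \<in> space (PiM J M') \<Longrightarrow> merge I1 J (x, y) \<in> space \<Omega>\<close> in auto)
        then show "norm (?g ?z (merge I1 J (x, y))) \<le> real (Suc H) * L"
          by (rule norm_le_real)
      qed
    qed
    have "(\<integral>y. ret R N H \<pi> (merge I1 J (x, y)) (Suc H) h s \<partial>PiM J M')
        = (\<integral>y. ?a + ?g ?z (merge I1 J (x, y)) \<partial>PiM J M')" unfolding e ..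
    also have "\<dots> = ?a + (\<integral>y. ?g ?z (merge I1 J (x, y)) \<partial>PiM J M')"
      using gi by (simp add: PJ.prob_space)
    also have "\<dots> = ?a + ?V ?z" using C1[OF x] by simp
    also have "\<dots> = D x" using Dval[of x] by simp
    finally show ?thesis .
  qed
  have fi: "integrable (PiM (I1 \<union> J) M') (\<lambda>\<omega>. ret R N H \<pi> \<omega> (Suc H) h s)"
    using abp_int[OF adm h1] OM by simp
  have fm: "(\<lambda>\<omega>. ret R N H \<pi> \<omega> (Suc H) h s) \<in> borel_measurable (PiM (I1 \<union> J) M')"
    using abp_meas[OF adm h1] OM by simp
  have "(\<lambda>x. \<integral>y. ret R N H \<pi> (merge I1 J (x, y)) (Suc H) h s \<partial>PiM J M') \<in> borel_measurable (PiM I1 M')"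
  proof (rule sigma_finite_measure.borel_measurable_lebesgue_integral)
    show "sigma_finite_measure (PiM J M')" by (rule PJ.sigma_finite_measure_axioms)
    show "case_prod (\<lambda>x y. ret R N H \<pi> (merge I1 J (x, y)) (Suc H) h s) \<in> borel_measurable (PiM I1 M' \<Otimes>\<^sub>M PiM J M')"
      using measurable_compose[OF measurable_merge fm] by (simp add: case_prod_beta')
  qed
  then have DmI: "D \<in> borel_measurable (PiM I1 M')"
    by (rule measurable_cong[THEN iffD1, rotated]) (use inner in auto)
  have Dres: "D (restrict \<omega> I1) = D \<omega>" for \<omega>
    unfolding D_def I1_def restrict_look[OF h1] ..
  have Dm: "D \<in> borel_measurable \<Omega>"
  proof -
    have "(\<lambda>\<omega>. D (restrict \<omega> I1)) \<in> borel_measurable (PiM (I1 \<union> J) M')"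
      by (rule measurable_compose[OF measurable_restrict_subset DmI]) auto
    then show ?thesis unfolding Dres OM .
  qed
  have Di: "integrable \<Omega> D"
  proof (rule PO.integrable_const_bound[where B="B + CV ?V"])
    show "AE x in \<Omega>. norm (D x) \<le> B + CV ?V"
      unfolding D_def using val_bnd[OF h1 B(2)] by (auto intro!: AE_I2)
  qed (rule Dm)
  have "Vpi R N M H \<pi> h s = integral\<^sup>L (PiM (I1 \<union> J) M') (\<lambda>\<omega>. ret R N H \<pi> \<omega> (Suc H) h s)"
    unfolding Vpi_def OM ..
  also have "\<dots> = (\<integral>x. (\<integral>y. ret R N H \<pi> (merge I1 J (x, y)) (Suc H) h s \<partial>PiM J M') \<partial>PiM I1 M')"
    by (rule psf.product_integral_fold[OF IJ fi])
  also have "\<dots> = (\<integral>x. D x \<partial>PiM I1 M')"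
    by (rule Bochner_Integration.integral_cong[OF refl]) (rule inner)
  also have "\<dots> = (\<integral>x. (\<integral>y. D (merge I1 J (x, y)) \<partial>PiM J M') \<partial>PiM I1 M')"
    by (simp add: Dmerge PJ.prob_space)
  also have "\<dots> = integral\<^sup>L (PiM (I1 \<union> J) M') D"
    by (rule psf.product_integral_fold[OF IJ, symmetric]) (use Di OM in simp)
  finally show ?thesis using Dm OM by simp
qed


abbreviation "Vs \<equiv> Vstar R N M H L"

definition EQ :: "nat \<Rightarrow> nat \<Rightarrow> 's \<Rightarrow> real" where
  "EQ h B s = (\<integral>\<omega>. Qstar h B (lookahead R N \<omega> h B s) (Vs (h + B)) \<partial>\<Omega>)"

definition W :: "nat \<Rightarrow> 's \<Rightarrow> real" where
  "W h s = Max ((\<lambda>B. EQ h B s) ` {1..lh H L h})"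

lemma lh_ne: "h \<le> H \<Longrightarrow> {1..lh H L h} \<noteq> {}"
  using L1 unfolding lh_def by auto

lemma EQ_le_W: "B \<in> {1..lh H L h} \<Longrightarrow> EQ h B s \<le> W h s"
  unfolding W_def by (rule Max_ge) auto

lemma W_eq: "B \<in> {1..lh H L h} \<Longrightarrow> (\<And>B'. B' \<in> {1..lh H L h} \<Longrightarrow> EQ h B' s \<le> EQ h B s) \<Longrightarrow> W h s = EQ h B s"
  unfolding W_def by (rule antisym, subst Max_le_iff) (auto intro: Max_ge)

lemma lh_le: "h \<le> H \<Longrightarrow> B \<in> {1..lh H L h} \<Longrightarrow> h + B \<le> Suc H"
  unfolding lh_def by auto

lemma val_mono: "V x \<le> V' x \<Longrightarrow> fraks I \<phi> (h + B) = x \<Longrightarrow> val h B I V \<phi> \<le> val h B I V' \<phi>"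
  unfolding val_def by simp

lemma Vpi_le_Vs:
  assumes "is_abp R N M H L \<pi>" "1 \<le> h"
  shows "Vpi R N M H \<pi> h s \<le> Vs h s"
  unfolding Vstar_def
proof (rule cSUP_upper)
  show "\<pi> \<in> {\<pi>. is_abp R N M H L \<pi>}" using assms by simp
  show "bdd_above ((\<lambda>\<pi>. Vpi R N M H \<pi> h s) ` {\<pi>. is_abp R N M H L \<pi>})"
    using Vpi_bnd[OF _ assms(2)] by (auto intro!: bdd_aboveI[where M="real (Suc H) * L"])
qed

lemma D_int:
  assumes "1 \<le> h" "h + B \<le> Suc H"
    and that: "(\<lambda>\<omega>. val h B (lookahead R N \<omega> h B s) V (f (lookahead R N \<omega> h B s))) \<in> borel_measurable \<Omega>"
  shows "integrable \<Omega> (\<lambda>\<omega>. val h B (lookahead R N \<omega> h B s) V (f (lookahead R N \<omega> h B s)))"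
proof -
  interpret PO: prob_space \<Omega> by (rule prob_Omega)
  show ?thesis
    by (rule PO.integrable_const_bound[where B="B + CV V"])
       (use val_bnd[OF assms(1,2)] that in \<open>auto intro!: AE_I2\<close>)
qed

lemma upper:
  assumes adm: "is_abp R N M H L \<pi>" and h: "h \<in> {1..H}"
  shows "Vpi R N M H \<pi> h s \<le> W h s"
proof -
  define B where "B = fst \<pi> h s"
  have hp: "hor \<pi>" by (rule abp_hor[OF adm])
  have B: "1 \<le> B" "h + B \<le> Suc H" "B \<in> {1..lh H L h}" using horD[OF hp, of h s] h B_def hp
    unfolding hor_def by auto
  have h1: "1 \<le> h" using h by simp
  let ?la = "\<lambda>\<omega>. lookahead R N \<omega> h B s"
  define D where "D = (\<lambda>\<omega>. val h B (?la \<omega>) (Vpi R N M H \<pi> (h + B)) (snd \<pi> h s (?la \<omega>)))"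
  have dec: "D \<in> borel_measurable \<Omega> \<and> Vpi R N M H \<pi> h s = integral\<^sup>L \<Omega> D"
    using decomp[OF adm h, of s] unfolding D_def B_def by simp
  have Di: "integrable \<Omega> D" unfolding D_def by (rule D_int[OF h1 B(2)]) (use dec D_def in simp)
  have "Vpi R N M H \<pi> h s = integral\<^sup>L \<Omega> D" using dec by simp
  also have "\<dots> \<le> (\<integral>\<omega>. Qstar h B (?la \<omega>) (Vs (h + B)) \<partial>\<Omega>)"
  proof (rule integral_mono[OF Di Qstar_int[OF h1 B(2)]])
    fix \<omega>
    have "D \<omega> \<le> val h B (?la \<omega>) (Vs (h + B)) (snd \<pi> h s (?la \<omega>))"
      unfolding D_def by (rule val_mono[OF Vpi_le_Vs[OF adm]]) (use h1 in auto)
    also have "\<dots> \<le> Qstar h B (?la \<omega>) (Vs (h + B))" by (rule Qstar_ge)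
    finally show "D \<omega> \<le> Qstar h B (?la \<omega>) (Vs (h + B))" .
  qed
  also have "\<dots> = EQ h B s" unfolding EQ_def ..
  also have "\<dots> \<le> W h s" by (rule EQ_le_W[OF B(3)])
  finally show ?thesis .
qed

lemma greedy_step:
  assumes adm: "is_abp R N M H L \<pi>" and h: "h \<in> {1..H}"
    and H1: "\<And>z. Vpi R N M H \<pi> (h + fst \<pi> h s) z = Vs (h + fst \<pi> h s) z"
    and H2: "\<And>\<omega> \<phi>'. \<omega> \<in> space \<Omega> \<Longrightarrow>
       val h (fst \<pi> h s) (lookahead R N \<omega> h (fst \<pi> h s) s) (Vs (h + fst \<pi> h s)) \<phi>' \<le>
       val h (fst \<pi> h s) (lookahead R N \<omega> h (fst \<pi> h s) s) (Vs (h + fst \<pi> h s))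
          (snd \<pi> h s (lookahead R N \<omega> h (fst \<pi> h s) s))"
  shows "Vpi R N M H \<pi> h s = EQ h (fst \<pi> h s) s"
proof -
  define B where "B = fst \<pi> h s"
  let ?la = "\<lambda>\<omega>. lookahead R N \<omega> h B s"
  define D where "D = (\<lambda>\<omega>. val h B (?la \<omega>) (Vpi R N M H \<pi> (h + B)) (snd \<pi> h s (?la \<omega>)))"
  have dec: "Vpi R N M H \<pi> h s = integral\<^sup>L \<Omega> D"
    using decomp[OF adm h, of s] unfolding D_def B_def by simp
  have VV: "Vpi R N M H \<pi> (h + B) = Vs (h + B)" using H1 unfolding B_def by (intro ext) simp
  have "integral\<^sup>L \<Omega> D = (\<integral>\<omega>. Qstar h B (?la \<omega>) (Vs (h + B)) \<partial>\<Omega>)"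
  proof (rule Bochner_Integration.integral_cong[OF refl])
    fix \<omega> assume "\<omega> \<in> space \<Omega>"
    then show "D \<omega> = Qstar h B (?la \<omega>) (Vs (h + B))"
      unfolding D_def VV using H2 unfolding B_def by (intro Qstar_eq[symmetric]) simp
  qed
  then show ?thesis using dec unfolding EQ_def B_def by simp
qed

definition Bst :: "nat \<Rightarrow> 's \<Rightarrow> nat" where
  "Bst h s = (SOME B. B \<in> {1..lh H L h} \<and> (\<forall>B'\<in>{1..lh H L h}. EQ h B' s \<le> EQ h B s))"

lemma Bst_prop:
  assumes "h \<le> H"
  shows "Bst h s \<in> {1..lh H L h} \<and> (\<forall>B'\<in>{1..lh H L h}. EQ h B' s \<le> EQ h (Bst h s) s)"
proof -
  have fin: "finite ((\<lambda>B. EQ h B s) ` {1..lh H L h})" by simp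
  have ne: "(\<lambda>B. EQ h B s) ` {1..lh H L h} \<noteq> {}" using lh_ne[OF assms] by simp
  obtain B where B: "B \<in> {1..lh H L h}" "EQ h B s = Max ((\<lambda>B. EQ h B s) ` {1..lh H L h})"
    using Max_in[OF fin ne] by force
  have "\<forall>B'\<in>{1..lh H L h}. EQ h B' s \<le> EQ h B s" unfolding B(2) using fin by auto
  then have "\<exists>B. B \<in> {1..lh H L h} \<and> (\<forall>B'\<in>{1..lh H L h}. EQ h B' s \<le> EQ h B s)" using B(1) by blast
  then show ?thesis unfolding Bst_def by (rule someI_ex)
qed

definition xsP :: "nat \<Rightarrow> nat \<Rightarrow> ('s,'a) mpol list" where
  "xsP h B = (SOME xs. set xs = Phi h B)"

lemma xsP_set: "set (xsP h B) = Phi h B"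
  unfolding xsP_def by (rule someI_ex) (rule finite_list[OF Phi_finite])

lemma xsP_ne: "xsP h B \<noteq> []"
  using xsP_set[of h B] Phi_ne[of h B] by auto

definition phist :: "nat \<Rightarrow> 's \<Rightarrow> ('s,'a) info \<Rightarrow> ('s,'a) mpol" where
  "phist h s I = selL (xsP h (Bst h s)) (val h (Bst h s) I (Vs (h + Bst h s))) (hd (xsP h (Bst h s)))"

definition pist :: "('s,'a) abp" where
  "pist = (Bst, phist)"

lemma pist_greedy:
  "val h (Bst h s) I (Vs (h + Bst h s)) \<phi>' \<le> val h (Bst h s) I (Vs (h + Bst h s)) (phist h s I)"
  if "I = lookahead R N \<omega> h (Bst h s) s" for \<omega>
proof -
  let ?B = "Bst h s"
  have "val h ?B I (Vs (h + ?B)) \<phi>' = val h ?B I (Vs (h + ?B)) (restrict \<phi>' {h..<h + ?B})"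
    unfolding that by (rule val_restrict)
  also have "\<dots> \<le> val h ?B I (Vs (h + ?B)) (phist h s I)"
    unfolding phist_def
    by (rule selL_max[where v="val h ?B I (Vs (h + ?B))"]) (use restrict_Phi xsP_set in blast)
  finally show ?thesis .
qed

lemma pist_adm: "is_abp R N M H L pist"
proof -
  have hp: "hor pist" unfolding hor_def pist_def using Bst_prop by auto
  have ch: "\<forall>h\<in>{1..H}. \<forall>s. \<exists>F. countable F \<and>
       (\<lambda>\<omega>. snd pist h s (lookahead R N \<omega> h (fst pist h s) s)) \<in> measurable \<Omega> (count_space F)"
  proof (intro ballI allI exI conjI)
    fix h s assume h: "h \<in> {1..H}"
    let ?B = "Bst h s"
    have B: "h + ?B \<le> Suc H" using Bst_prop[of h s] h lh_le by auto
    show "countable (Phi h ?B)" using Phi_finite by (rule countable_finite)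
    have "(\<lambda>\<omega>. selL (xsP h ?B) (\<lambda>\<phi>. val h ?B (lookahead R N \<omega> h ?B s) (Vs (h + ?B)) \<phi>) ((\<lambda>_. hd (xsP h ?B)) \<omega>))
        \<in> measurable \<Omega> (count_space (Phi h ?B))"
    proof (rule selL_meas)
      show "countable (Phi h ?B)" using Phi_finite by (rule countable_finite)
      show "set (xsP h ?B) \<subseteq> Phi h ?B" using xsP_set by simp
      show "(\<lambda>\<omega>. val h ?B (lookahead R N \<omega> h ?B s) (Vs (h + ?B)) \<phi>) \<in> borel_measurable \<Omega>" for \<phi>
        by (rule val_meas) (use h B in auto)
      have "hd (xsP h ?B) \<in> Phi h ?B" using xsP_set xsP_ne hd_in_set by metis
      then show "(\<lambda>_. hd (xsP h ?B)) \<in> measurable \<Omega> (count_space (Phi h ?B))" by simp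
    qed
    then show "(\<lambda>\<omega>. snd pist h s (lookahead R N \<omega> h (fst pist h s) s)) \<in> measurable \<Omega> (count_space (Phi h ?B))"
      unfolding pist_def phist_def by simp
  qed
  have "(\<lambda>\<omega>. ret R N H pist \<omega> (Suc H) h s) \<in> borel_measurable \<Omega>" if "h \<in> {1..H}" for h s
    by (rule ret_meas[OF hp ch]) (use that in auto)
  then show ?thesis using hp unfolding is_abp_def hor_def by blast
qed

lemma adm_ne: "{\<pi>. is_abp R N M H L \<pi>} \<noteq> {}"
  using pist_adm by blast

lemma Vpi_top: "Vpi R N M H \<pi> (Suc H) s = 0"
  unfolding Vpi_def by simp

lemma Vs_top: "Vs (Suc H) s = 0"
proof -
  have "Vs (Suc H) s = (SUP \<pi>\<in>{\<pi>. is_abp R N M H L \<pi>}. (0::real))"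
    unfolding Vstar_def Vpi_top ..
  also have "\<dots> = 0" by (rule cSUP_const[OF adm_ne])
  finally show ?thesis .
qed

lemma Vs_le_W:
  assumes "h \<in> {1..H}"
  shows "Vs h s \<le> W h s"
  unfolding Vstar_def
proof (rule cSUP_least[OF adm_ne])
  fix \<pi> assume "\<pi> \<in> {\<pi>. is_abp R N M H L \<pi>}"
  then show "Vpi R N M H \<pi> h s \<le> W h s" using upper[OF _ assms] by blast
qed

lemma main_ind:
  "\<forall>h. 1 \<le> h \<longrightarrow> h \<le> Suc H \<longrightarrow> Suc H - h \<le> k \<longrightarrow>
     (\<forall>s. Vpi R N M H pist h s = Vs h s \<and> (h \<le> H \<longrightarrow> Vs h s = W h s))"
proof (induction k)
  case 0
  then show ?case using Vpi_top Vs_top by (auto simp: le_Suc_eq)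
next
  case (Suc k)
  show ?case
  proof (intro allI impI)
    fix h s assume h: "1 \<le> h" "h \<le> Suc H" "Suc H - h \<le> Suc k"
    show "Vpi R N M H pist h s = Vs h s \<and> (h \<le> H \<longrightarrow> Vs h s = W h s)"
    proof (cases "h = Suc H")
      case True then show ?thesis using Vpi_top Vs_top by simp
    next
      case False
      then have hH: "h \<in> {1..H}" using h by auto
      let ?B = "fst pist h s"
      have Bp: "?B \<in> {1..lh H L h}" "\<forall>B'\<in>{1..lh H L h}. EQ h B' s \<le> EQ h ?B s"
        using Bst_prop[of h s] hH unfolding pist_def by auto
      have hB: "h + ?B \<le> Suc H" using lh_le Bp hH by auto
      have H1: "Vpi R N M H pist (h + ?B) z = Vs (h + ?B) z" for z
        using Suc.IH hB Bp(1) h by auto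
      have "Vpi R N M H pist h s = EQ h ?B s"
      proof (rule greedy_step[OF pist_adm hH H1])
        fix \<omega> \<phi>'
        show "val h ?B (lookahead R N \<omega> h ?B s) (Vs (h + ?B)) \<phi>' \<le>
              val h ?B (lookahead R N \<omega> h ?B s) (Vs (h + ?B)) (snd pist h s (lookahead R N \<omega> h ?B s))"
          unfolding pist_def by simp (rule pist_greedy, rule refl)
      qed
      also have "\<dots> = W h s" using W_eq[OF Bp(1)] Bp(2) by simp
      finally have e: "Vpi R N M H pist h s = W h s" .
      have "Vpi R N M H pist h s \<le> Vs h s" by (rule Vpi_le_Vs[OF pist_adm]) (use h in simp)
      moreover have "Vs h s \<le> W h s" by (rule Vs_le_W[OF hH])
      ultimately show ?thesis using e by simp
    qed
  qed
qed

lemma main: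
  assumes "1 \<le> h" "h \<le> Suc H"
  shows "Vpi R N M H pist h s = Vs h s" "h \<le> H \<Longrightarrow> Vs h s = W h s"
  using main_ind[of "Suc H - h"] assms by auto


lemma greedy_ind:
  assumes adm: "is_abp R N M H L \<pi>"
    and G1: "\<forall>h\<in>{1..H}. \<forall>s. \<forall>B\<in>{1..lh H L h}. EQ h B s \<le> EQ h (fst \<pi> h s) s"
    and G2: "\<forall>h\<in>{1..H}. \<forall>s. \<forall>\<omega>\<in>space \<Omega>. \<forall>\<phi>'.
               (let B = fst \<pi> h s; I = lookahead R N \<omega> h B s; \<phi> = snd \<pi> h s I in
                 (\<Sum>t\<in>{h..<h + B}. frakR I \<phi>' t) + Vs (h + B) (fraks I \<phi>' (h + B))
                 \<le> (\<Sum>t\<in>{h..<h + B}. frakR I \<phi> t) + Vs (h + B) (fraks I \<phi> (h + B)))"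
  shows "\<forall>h. 1 \<le> h \<longrightarrow> h \<le> Suc H \<longrightarrow> Suc H - h \<le> k \<longrightarrow> (\<forall>s. Vpi R N M H \<pi> h s = Vs h s)"
proof (induction k)
  case 0
  then show ?case using Vpi_top Vs_top by (auto simp: le_Suc_eq)
next
  case (Suc k)
  show ?case
  proof (intro allI impI)
    fix h s assume h: "1 \<le> h" "h \<le> Suc H" "Suc H - h \<le> Suc k"
    show "Vpi R N M H \<pi> h s = Vs h s"
    proof (cases "h = Suc H")
      case True then show ?thesis using Vpi_top Vs_top by simp
    next
      case False
      then have hH: "h \<in> {1..H}" using h by auto
      let ?B = "fst \<pi> h s"
      have hp: "hor \<pi>" by (rule abp_hor[OF adm])
      have Bp: "?B \<in> {1..lh H L h}" using hp hH unfolding hor_def by auto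
      have hB: "h + ?B \<le> Suc H" using lh_le Bp hH by auto
      have H1: "Vpi R N M H \<pi> (h + ?B) z = Vs (h + ?B) z" for z
        using Suc.IH hB Bp h by auto
      have "Vpi R N M H \<pi> h s = EQ h ?B s"
      proof (rule greedy_step[OF adm hH H1])
        fix \<omega> \<phi>' assume "\<omega> \<in> space \<Omega>"
        then show "val h ?B (lookahead R N \<omega> h ?B s) (Vs (h + ?B)) \<phi>' \<le>
              val h ?B (lookahead R N \<omega> h ?B s) (Vs (h + ?B)) (snd \<pi> h s (lookahead R N \<omega> h ?B s))"
          using G2 hH unfolding val_def Let_def by blast
      qed
      also have "\<dots> = W h s" using W_eq[OF Bp] G1 hH by simp
      also have "\<dots> = Vs h s" using main(2)[of h s] hH by simp
      finally show ?thesis .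
    qed
  qed
qed

end

theorem proposition1:
  fixes M :: "nat \<Rightarrow> 'w measure"
    and R :: "nat \<Rightarrow> 'w \<Rightarrow> 's::finite \<Rightarrow> 'a::finite \<Rightarrow> real"
    and N :: "nat \<Rightarrow> 'w \<Rightarrow> 's \<Rightarrow> 'a \<Rightarrow> 's"
    and H L :: nat
  assumes "L \<ge> 1"
    and "\<forall>t\<in>{1..H}. prob_space (M t)"
    and "\<forall>t\<in>{1..H}. \<forall>s a. (\<lambda>w. R t w s a) \<in> borel_measurable (M t)"
    and "\<forall>t\<in>{1..H}. \<forall>s a. (\<lambda>w. N t w s a) \<in> measurable (M t) (count_space UNIV)"
    and "\<forall>t\<in>{1..H}. \<forall>w\<in>space (M t). \<forall>s a. 0 \<le> R t w s a \<and> R t w s a \<le> 1"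
  shows
    "(\<exists>\<pi>. is_abp R N M H L \<pi> \<and>
        (\<forall>\<pi>'. is_abp R N M H L \<pi>' \<longrightarrow> (\<forall>s. Vpi R N M H \<pi>' 1 s \<le> Vpi R N M H \<pi> 1 s)))
     \<and> (\<forall>s. Vstar R N M H L (Suc H) s = 0)
     \<and> (\<forall>h\<in>{1..H}. \<forall>s. Vstar R N M H L h s =
          Max ((\<lambda>B. \<integral>\<omega>. Qstar h B (lookahead R N \<omega> h B s) (Vstar R N M H L (h + B)) \<partial>Omega M H)
               ` {1..lh H L h}))
     \<and> (\<exists>\<pi>. is_abp R N M H L \<pi>)
     \<and> (\<forall>\<pi>. is_abp R N M H L \<pi>
          \<and> (\<forall>h\<in>{1..H}. \<forall>s. \<forall>B\<in>{1..lh H L h}.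
               (\<integral>\<omega>. Qstar h B (lookahead R N \<omega> h B s) (Vstar R N M H L (h + B)) \<partial>Omega M H)
               \<le> (\<integral>\<omega>. Qstar h (fst \<pi> h s) (lookahead R N \<omega> h (fst \<pi> h s) s)
                       (Vstar R N M H L (h + fst \<pi> h s)) \<partial>Omega M H))
          \<and> (\<forall>h\<in>{1..H}. \<forall>s. \<forall>\<omega>\<in>space (Omega M H). \<forall>\<phi>'.
               (let B = fst \<pi> h s; I = lookahead R N \<omega> h B s; \<phi> = snd \<pi> h s I in
                 (\<Sum>t\<in>{h..<h + B}. frakR I \<phi>' t) + Vstar R N M H L (h + B) (fraks I \<phi>' (h + B))
                 \<le> (\<Sum>t\<in>{h..<h + B}. frakR I \<phi> t) + Vstar R N M H L (h + B) (fraks I \<phi> (h + B))))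
          \<longrightarrow> (\<forall>h\<in>{1..Suc H}. \<forall>s. Vpi R N M H \<pi> h s = Vstar R N M H L h s))"
proof -
  interpret mdp M R N H L using assms by unfold_locales
  have P1: "\<exists>\<pi>. is_abp R N M H L \<pi> \<and>
        (\<forall>\<pi>'. is_abp R N M H L \<pi>' \<longrightarrow> (\<forall>s. Vpi R N M H \<pi>' 1 s \<le> Vpi R N M H \<pi> 1 s))"
  proof (intro exI conjI allI impI)
    show "is_abp R N M H L pist" by (rule pist_adm)
    fix \<pi>' s assume "is_abp R N M H L \<pi>'"
    then have "Vpi R N M H \<pi>' 1 s \<le> Vs 1 s" by (rule Vpi_le_Vs) simp
    also have "\<dots> = Vpi R N M H pist 1 s" using main(1)[of 1 s] by simp
    finally show "Vpi R N M H \<pi>' 1 s \<le> Vpi R N M H pist 1 s" .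
  qed
  have P2: "\<forall>s. Vstar R N M H L (Suc H) s = 0" using Vs_top by simp
  have P3: "\<forall>h\<in>{1..H}. \<forall>s. Vstar R N M H L h s =
          Max ((\<lambda>B. \<integral>\<omega>. Qstar h B (lookahead R N \<omega> h B s) (Vstar R N M H L (h + B)) \<partial>Omega M H)
               ` {1..lh H L h})"
    using main(2) unfolding W_def EQ_def by auto
  have P4: "\<exists>\<pi>. is_abp R N M H L \<pi>" using pist_adm by blast
  have P5: "\<forall>h\<in>{1..Suc H}. \<forall>s. Vpi R N M H \<pi> h s = Vstar R N M H L h s"
    if "is_abp R N M H L \<pi>
          \<and> (\<forall>h\<in>{1..H}. \<forall>s. \<forall>B\<in>{1..lh H L h}.
               (\<integral>\<omega>. Qstar h B (lookahead R N \<omega> h B s) (Vstar R N M H L (h + B)) \<partial>Omega M H)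
               \<le> (\<integral>\<omega>. Qstar h (fst \<pi> h s) (lookahead R N \<omega> h (fst \<pi> h s) s)
                       (Vstar R N M H L (h + fst \<pi> h s)) \<partial>Omega M H))
          \<and> (\<forall>h\<in>{1..H}. \<forall>s. \<forall>\<omega>\<in>space (Omega M H). \<forall>\<phi>'.
               (let B = fst \<pi> h s; I = lookahead R N \<omega> h B s; \<phi> = snd \<pi> h s I in
                 (\<Sum>t\<in>{h..<h + B}. frakR I \<phi>' t) + Vstar R N M H L (h + B) (fraks I \<phi>' (h + B))
                 \<le> (\<Sum>t\<in>{h..<h + B}. frakR I \<phi> t) + Vstar R N M H L (h + B) (fraks I \<phi> (h + B))))"
    for \<pi>
  proof -
    have a: "is_abp R N M H L \<pi>" using that by blast
    have g1: "\<forall>h\<in>{1..H}. \<forall>s. \<forall>B\<in>{1..lh H L h}. EQ h B s \<le> EQ h (fst \<pi> h s) s"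
      using that unfolding EQ_def by blast
    have g2: "\<forall>h\<in>{1..H}. \<forall>s. \<forall>\<omega>\<in>space \<Omega>. \<forall>\<phi>'.
               (let B = fst \<pi> h s; I = lookahead R N \<omega> h B s; \<phi> = snd \<pi> h s I in
                 (\<Sum>t\<in>{h..<h + B}. frakR I \<phi>' t) + Vs (h + B) (fraks I \<phi>' (h + B))
                 \<le> (\<Sum>t\<in>{h..<h + B}. frakR I \<phi> t) + Vs (h + B) (fraks I \<phi> (h + B)))"
      using that by blast
    show ?thesis
    proof (intro ballI allI)
      fix h s assume "h \<in> {1..Suc H}"
      then show "Vpi R N M H \<pi> h s = Vstar R N M H L h s"
        using greedy_ind[OF a g1 g2, of "Suc H - h"] by auto
    qed
  qed
  show ?thesis using P1 P2 P3 P4 P5 by blast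
qed

end
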